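(* Let $\kappa\ge0$, $\alpha\ge0$, $p,q\in[1,\infty]$, $\varepsilon,\widehat\varepsilon\ge0$, training points $(\boldsymbol x^i,y^i)$, $i\in[N]$, and auxiliary points $(\widehat{\boldsymbol x}^j,\widehat y^j)$, $j\in[\widehat N]$, be given. Consider the convex program (Inter-ARO$^\star$): $$\inf\ \varepsilon\lambda+\widehat\varepsilon\widehat\lambda+\frac1N\sum_{i=1}^N s_i+\frac1{\widehat N}\sum_{j=1}^{\widehat N}\widehat s_j$$ over $\boldsymbol\beta\in\mathbb{R}^n$, $\lambda\ge0$, $\widehat\lambda\ge0$, $\boldsymbol s\in\mathbb{R}^N_+$, $\widehat{\boldsymbol s}\in\mathbb{R}^{\widehat N}_+$, $\boldsymbol z^{l}_{ij}\in\mathbb{R}^n$ for $(i,j,l)\in[N]\times[\widehat N]\times\{-1,1\}$, subject to, for all $(i,j,l)\in[N]\times[\widehat N]\times\{-1,1\}$: $$L^\alpha\big(l\,\boldsymbol\beta^\top\boldsymbol x^i+(\boldsymbol z^l_{ij})^\top(\widehat{\boldsymbol x}^j-\boldsymbol x^i)\big)\le s_i+\frac{\kappa(1-ly^i)}2\lambda+\widehat s_j+\frac{\kappa(1-l\widehat y^j)}2\widehat\lambda,$$ $$\|l\boldsymbol\beta-\boldsymbol z^l_{ij}\|_{q^\star}\le\lambda,\qquad \|\boldsymbol z^l_{ij}\|_{q^\star}\le\widehat\lambda,$$ where $L^\alpha(z)=\log(1+\exp(-z+\alpha\|\boldsymbol\beta\|_{p^\star}))$. Then for every feasible point $(\boldsymbol\beta,\lambda,\widehat\lambda,\boldsymbol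 s,\widehat{\boldsymbol s},(\boldsymbol z^l_{ij}))$ of this program, $(\boldsymbol\beta,\lambda,\widehat\lambda,\boldsymbol s,\widehat{\boldsymbol s})$ satisfies all constraints of the semi-infinite program $$\sup_{\boldsymbol x\in\mathbb{R}^n}\{\ell^\alpha_{\boldsymbol\beta}(\boldsymbol x,l)-\lambda\|\boldsymbol x^i-\boldsymbol x\|_q-\widehat\lambda\|\widehat{\boldsymbol x}^j-\boldsymbol x\|_q\}\le s_i+\tfrac{\kappa(1-ly^i)}{2}\lambda+\widehat s_j+\tfrac{\kappa(1-l\widehat y^j)}{2}\widehat\lambda\ \ \forall (i,j,l),$$ and $\mathbb{E}_{\mathbb{Q}}[\ell^\alpha_{\boldsymbol\beta}(\boldsymbol x,y)]\le\varepsilon\lambda+\widehat\varepsilon\widehat\lambda+\frac1N\sum_i s_i+\frac1{\widehat N}\sum_j\widehat s_j$ for every $\mathbb{Q}\in\mathfrak B_\varepsilon(\mathbb{P}_N)\cap\mathfrak B_{\widehat\varepsilon}(\widehat{\mathbb{P}}_{\widehat N})$. In particular the optimal value of Inter-ARO$^\star$ is at least the optimal value of (Inter-ARO) $\inf_{\boldsymbol\beta}\sup_{\mathbb{Q}\in\mathfrak B_\varepsilon(\mathbb{P}_N)\cap\mathfrak B_{\widehat\varepsilon}(\widehat{\mathbb{P}}_{\widehat N})}\mathbb{E}_{\mathbb{Q}}[\ell^\alpha_{\boldsymbol\beta}(\boldsymbol x,y)]$.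
   Context: $1/p+1/p^\star=1$, $1/q+1/q^\star=1$. $\ell^\alpha_{\boldsymbol\beta}(\boldsymbol x,y)=\log(1+\exp(-y\boldsymbol\beta^\top\boldsymbol x+\alpha\|\boldsymbol\beta\|_{p^\star}))=L^\alpha(y\boldsymbol\beta^\top\boldsymbol x)$. $\Xi=\mathbb{R}^n\times\{-1,+1\}$ with metric $d((\boldsymbol x,y),(\boldsymbol x',y'))=\|\boldsymbol x-\boldsymbol x'\|_q+\kappa\mathbb 1[y\ne y']$; $\mathrm W$ is the induced type-1 Wasserstein distance on Borel probability measures with finite first moment; $\mathfrak B_\varepsilon(\mathbb{P})=\{\mathbb{Q}:\mathrm W(\mathbb{Q},\mathbb{P})\le\varepsilon\}$; $\mathbb{P}_N=\frac1N\sum_i\delta_{(\boldsymbol x^i,y^i)}$, $\widehat{\mathbb{P}}_{\widehat N}=\frac1{\widehat N}\sum_j\delta_{(\widehat{\boldsymbol x}^j,\widehat y^j)}$. The supremum over an empty set is $-\infty$. *)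

theory Defs
  imports "HOL-Probability.Probability"
begin

definition pnorm :: "ereal \<Rightarrow> real ^ 'n \<Rightarrow> real" where
  "pnorm p x = (if p = \<infinity> then Max (range (\<lambda>i. \<bar>x $ i\<bar>))
                else (\<Sum>i\<in>UNIV. \<bar>x $ i\<bar> powr real_of_ereal p) powr (1 / real_of_ereal p))"

definition conj_exp :: "ereal \<Rightarrow> ereal" where
  "conj_exp p = (if p = 1 then \<infinity> else if p = \<infinity> then 1
                 else ereal (real_of_ereal p / (real_of_ereal p - 1)))"

definition Lalpha :: "real \<Rightarrow> ereal \<Rightarrow> real ^ 'n \<Rightarrow> real \<Rightarrow> real" where
  "Lalpha \<alpha> p \<beta> z = ln (1 + exp (- z + \<alpha> * pnorm (conj_exp p) \<beta>))"

definition loss :: "real \<Rightarrow> ereal \<Rightarrow> real ^ 'n \<Rightarrow> real ^ 'n \<Rightarrow> real \<Rightarrow> real" where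
  "loss \<alpha> p \<beta> x y = Lalpha \<alpha> p \<beta> (y * (\<beta> \<bullet> x))"

definition Xi :: "((real ^ 'n) \<times> real) set" where
  "Xi = UNIV \<times> {-1, 1}"

definition dXi :: "real \<Rightarrow> ereal \<Rightarrow> ((real ^ 'n) \<times> real) \<Rightarrow> ((real ^ 'n) \<times> real) \<Rightarrow> real" where
  "dXi \<kappa> q u v = pnorm q (fst u - fst v) + \<kappa> * (if snd u \<noteq> snd v then 1 else 0)"

definition P1 :: "real \<Rightarrow> ereal \<Rightarrow> ((real ^ 'n) \<times> real) measure set" where
  "P1 \<kappa> q = {Q. sets Q = sets borel \<and> prob_space Q \<and> (AE u in Q. u \<in> Xi) \<and>
      (\<exists>u0\<in>Xi. (\<integral>\<^sup>+ u. ennreal (dXi \<kappa> q u u0) \<partial>Q) < \<infinity>)}"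

definition couplings :: "((real ^ 'n) \<times> real) measure \<Rightarrow> ((real ^ 'n) \<times> real) measure
     \<Rightarrow> (((real ^ 'n) \<times> real) \<times> ((real ^ 'n) \<times> real)) measure set" where
  "couplings Q P = {\<pi>. sets \<pi> = sets borel \<and> prob_space \<pi> \<and>
      distr \<pi> borel fst = Q \<and> distr \<pi> borel snd = P}"

definition wass :: "real \<Rightarrow> ereal \<Rightarrow> ((real ^ 'n) \<times> real) measure \<Rightarrow> ((real ^ 'n) \<times> real) measure \<Rightarrow> ennreal" where
  "wass \<kappa> q Q P = (INF \<pi>\<in>couplings Q P. \<integral>\<^sup>+ w. ennreal (dXi \<kappa> q (fst w) (snd w)) \<partial>\<pi>)"

definition wball :: "real \<Rightarrow> ereal \<Rightarrow> real \<Rightarrow> ((real ^ 'n) \<times> real) measure \<Rightarrow> ((real ^ 'n) \<times> real) measure set" where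
  "wball \<kappa> q \<epsilon> P = {Q \<in> P1 \<kappa> q. wass \<kappa> q Q P \<le> ennreal \<epsilon>}"

definition empirical :: "nat \<Rightarrow> (nat \<Rightarrow> real ^ 'n) \<Rightarrow> (nat \<Rightarrow> real) \<Rightarrow> ((real ^ 'n) \<times> real) measure" where
  "empirical N xs ys = distr (uniform_count_measure {..<N}) borel (\<lambda>i. (xs i, ys i))"

definition interARO_star_feasible ::
  "real \<Rightarrow> real \<Rightarrow> ereal \<Rightarrow> ereal \<Rightarrow> nat \<Rightarrow> (nat \<Rightarrow> real ^ 'n) \<Rightarrow> (nat \<Rightarrow> real) \<Rightarrow>
   nat \<Rightarrow> (nat \<Rightarrow> real ^ 'n) \<Rightarrow> (nat \<Rightarrow> real) \<Rightarrow>
   real ^ 'n \<Rightarrow> real \<Rightarrow> real \<Rightarrow> (nat \<Rightarrow> real) \<Rightarrow> (nat \<Rightarrow> real) \<Rightarrow>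
   (nat \<Rightarrow> nat \<Rightarrow> real \<Rightarrow> real ^ 'n) \<Rightarrow> bool" where
  "interARO_star_feasible \<kappa> \<alpha> p q N xs ys Nh xhs yhs \<beta> lam lamh s sh z \<longleftrightarrow>
     lam \<ge> 0 \<and> lamh \<ge> 0 \<and> (\<forall>i<N. s i \<ge> 0) \<and> (\<forall>j<Nh. sh j \<ge> 0) \<and>
     (\<forall>i<N. \<forall>j<Nh. \<forall>l\<in>{-1, 1::real}.
        Lalpha \<alpha> p \<beta> (l * (\<beta> \<bullet> xs i) + z i j l \<bullet> (xhs j - xs i))
          \<le> s i + \<kappa> * (1 - l * ys i) / 2 * lam + sh j + \<kappa> * (1 - l * yhs j) / 2 * lamh \<and>
        pnorm (conj_exp q) (l *\<^sub>R \<beta> - z i j l) \<le> lam \<and>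
        pnorm (conj_exp q) (z i j l) \<le> lamh)"

definition interARO_star_obj ::
  "real \<Rightarrow> real \<Rightarrow> nat \<Rightarrow> nat \<Rightarrow> real \<Rightarrow> real \<Rightarrow> (nat \<Rightarrow> real) \<Rightarrow> (nat \<Rightarrow> real) \<Rightarrow> real" where
  "interARO_star_obj \<epsilon> \<epsilon>h N Nh lam lamh s sh =
     \<epsilon> * lam + \<epsilon>h * lamh + (\<Sum>i<N. s i) / real N + (\<Sum>j<Nh. sh j) / real Nh"

definition interARO_star_value ::
  "real \<Rightarrow> real \<Rightarrow> ereal \<Rightarrow> ereal \<Rightarrow> real \<Rightarrow> real \<Rightarrow> nat \<Rightarrow> (nat \<Rightarrow> real ^ 'n) \<Rightarrow> (nat \<Rightarrow> real) \<Rightarrow>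
   nat \<Rightarrow> (nat \<Rightarrow> real ^ 'n) \<Rightarrow> (nat \<Rightarrow> real) \<Rightarrow> ereal" where
  "interARO_star_value \<kappa> \<alpha> p q \<epsilon> \<epsilon>h N xs ys Nh xhs yhs =
     (INF (\<beta>, lam, lamh, s, sh, z) \<in>
        {(\<beta>, lam, lamh, s, sh, z). interARO_star_feasible \<kappa> \<alpha> p q N xs ys Nh xhs yhs \<beta> lam lamh s sh z}.
        ereal (interARO_star_obj \<epsilon> \<epsilon>h N Nh lam lamh s sh))"

definition interARO_value ::
  "real \<Rightarrow> real \<Rightarrow> ereal \<Rightarrow> ereal \<Rightarrow> real \<Rightarrow> real \<Rightarrow> nat \<Rightarrow> (nat \<Rightarrow> real ^ 'n) \<Rightarrow> (nat \<Rightarrow> real) \<Rightarrow>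
   nat \<Rightarrow> (nat \<Rightarrow> real ^ 'n) \<Rightarrow> (nat \<Rightarrow> real) \<Rightarrow> ereal" where
  "interARO_value \<kappa> \<alpha> p q \<epsilon> \<epsilon>h N xs ys Nh xhs yhs =
     (INF \<beta>. SUP Q \<in> wball \<kappa> q \<epsilon> (empirical N xs ys) \<inter> wball \<kappa> q \<epsilon>h (empirical Nh xhs yhs).
        ereal (\<integral>u. loss \<alpha> p \<beta> (fst u) (snd u) \<partial>Q))"

end

theory Submission imports Defs begin

lemma holder_sum:
  fixes r s :: real and a b :: "'i \<Rightarrow> real"
  assumes r: "r>1" and s: "s>1" and rs: "1/r+1/s=1" and fin: "finite I"
  shows "(\<Sum>i\<in>I. \<bar>a i\<bar> * \<bar>b i\<bar>) \<le> (\<Sum>i\<in>I. \<bar>a i\<bar> powr r) powr (1/r) * (\<Sum>i\<in>I. \<bar>b i\<bar> powr s) powr (1/s)"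
proof -
  define A where "A = (\<Sum>i\<in>I. \<bar>a i\<bar> powr r)"
  define B where "B = (\<Sum>i\<in>I. \<bar>b i\<bar> powr s)"
  have A0: "A \<ge> 0" "B \<ge> 0" unfolding A_def B_def by (auto intro: sum_nonneg)
  show ?thesis
  proof (cases "A = 0 \<or> B = 0")
    case True
    then have "(\<forall>i\<in>I. a i = 0) \<or> (\<forall>i\<in>I. b i = 0)"
      unfolding A_def B_def using fin by (subst (asm) sum_nonneg_eq_0_iff; auto)+
    then have "(\<Sum>i\<in>I. \<bar>a i\<bar> * \<bar>b i\<bar>) = 0" by auto
    then show ?thesis by simp
  next
    case False
    then have Ap: "A > 0" "B > 0" using A0 by auto
    define An where "An = A powr (1/r)"
    define Bn where "Bn = B powr (1/s)"
    have Anp: "An > 0" "Bn > 0" using Ap unfolding An_def Bn_def by auto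
    have AnA: "An powr r = A" unfolding An_def using Ap r by (simp add: powr_powr)
    have BnB: "Bn powr s = B" unfolding Bn_def using Ap s by (simp add: powr_powr)
    have pt: "\<bar>a i\<bar> * \<bar>b i\<bar> / (An * Bn) \<le> \<bar>a i\<bar> powr r / (A * r) + \<bar>b i\<bar> powr s / (B * s)" for i
    proof -
      have "(\<bar>a i\<bar>/An) * (\<bar>b i\<bar>/Bn) \<le> (\<bar>a i\<bar>/An) powr r / r + (\<bar>b i\<bar>/Bn) powr s / s"
        using Youngs_inequality[OF r s rs, of "\<bar>a i\<bar>/An" "\<bar>b i\<bar>/Bn"] Anp by auto
      also have "\<dots> = \<bar>a i\<bar> powr r / (A * r) + \<bar>b i\<bar> powr s / (B * s)"
        using Anp by (simp add: powr_divide AnA BnB)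
      finally show ?thesis by simp
    qed
    have "(\<Sum>i\<in>I. \<bar>a i\<bar> * \<bar>b i\<bar>) / (An * Bn) = (\<Sum>i\<in>I. \<bar>a i\<bar> * \<bar>b i\<bar> / (An * Bn))"
      by (simp add: sum_divide_distrib)
    also have "\<dots> \<le> (\<Sum>i\<in>I. \<bar>a i\<bar> powr r / (A * r) + \<bar>b i\<bar> powr s / (B * s))"
      by (rule sum_mono) (rule pt)
    also have "\<dots> = A / (A * r) + B / (B * s)"
      unfolding A_def B_def by (simp add: sum.distrib sum_divide_distrib)
    also have "\<dots> = 1" using Ap rs by simp
    finally show ?thesis using Anp unfolding An_def Bn_def A_def B_def
      by (simp add: divide_le_eq)
  qed
qed

lemma pnorm_nonneg: "pnorm p x \<ge> 0"
proof (cases "p = \<infinity>")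
  case True
  have "\<bar>x $ undefined\<bar> \<le> Max (range (\<lambda>i. \<bar>x $ i\<bar>))" by (rule Max_ge) auto
  then show ?thesis using True unfolding pnorm_def by (smt (verit))
qed (simp add: pnorm_def)

lemma pnorm_minus: "pnorm p (x - y) = pnorm p (y - x)"
  unfolding pnorm_def by (simp add: abs_minus_commute)

lemma pnorm_inf_ge: "\<bar>x $ i\<bar> \<le> pnorm \<infinity> x"
  unfolding pnorm_def by (simp add: Max_ge)

lemma pnorm_one: "pnorm 1 x = (\<Sum>i\<in>UNIV. \<bar>x $ i\<bar>)"
  unfolding pnorm_def by (simp add: sum_nonneg)

lemma holder_inf:
  fixes x y :: "real ^ 'n"
  shows "\<bar>x \<bullet> y\<bar> \<le> pnorm \<infinity> x * pnorm 1 y"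
proof -
  have "\<bar>x \<bullet> y\<bar> \<le> (\<Sum>i\<in>UNIV. \<bar>x $ i\<bar> * \<bar>y $ i\<bar>)"
    unfolding inner_vec_def by (rule order.trans[OF sum_abs]) (simp add: abs_mult)
  also have "\<dots> \<le> (\<Sum>i\<in>UNIV. pnorm \<infinity> x * \<bar>y $ i\<bar>)"
    by (intro sum_mono mult_right_mono pnorm_inf_ge) auto
  finally show ?thesis by (simp add: pnorm_one sum_distrib_left)
qed

lemma holder_pnorm:
  fixes x y :: "real ^ 'n"
  assumes "1 \<le> p"
  shows "\<bar>x \<bullet> y\<bar> \<le> pnorm p x * pnorm (conj_exp p) y"
proof -
  consider "p = 1" | "p = \<infinity>" | r where "p = ereal r" "r > 1"
    using assms by (cases p) (auto, force)
  then show ?thesis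
  proof cases
    case 1
    then show ?thesis using holder_inf[of y x] by (simp add: conj_exp_def inner_commute mult.commute)
  next
    case 2
    then show ?thesis using holder_inf[of x y] by (simp add: conj_exp_def)
  next
    case 3
    define s where "s = r / (r - 1)"
    have s1: "s > 1" using 3 unfolding s_def by (simp add: field_simps)
    have rs: "1/r + 1/s = 1" using 3 unfolding s_def by (simp add: field_simps)
    have ce: "conj_exp p = ereal s" using 3 unfolding conj_exp_def s_def by auto
    have "\<bar>x \<bullet> y\<bar> \<le> (\<Sum>i\<in>UNIV. \<bar>x $ i\<bar> * \<bar>y $ i\<bar>)"
      unfolding inner_vec_def by (rule order.trans[OF sum_abs]) (simp add: abs_mult)
    also have "\<dots> \<le> (\<Sum>i\<in>UNIV. \<bar>x $ i\<bar> powr r) powr (1/r) * (\<Sum>i\<in>UNIV. \<bar>y $ i\<bar> powr s) powr (1/s)"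
      by (rule holder_sum[OF 3(2) s1 rs]) simp
    finally show ?thesis using 3 ce unfolding pnorm_def by simp
  qed
qed

lemma L_lip:
  fixes w a c :: real
  shows "ln (1 + exp (- (w + a) + c)) \<le> ln (1 + exp (- w + c)) + \<bar>a\<bar>"
proof -
  have "exp (- (w + a) + c) \<le> exp (- w + c) * exp \<bar>a\<bar>"
    by (simp add: exp_add[symmetric])
  moreover have "1 \<le> exp \<bar>a\<bar>" by simp
  moreover have "(1 + exp (- w + c)) * exp \<bar>a\<bar> = exp \<bar>a\<bar> + exp (- w + c) * exp \<bar>a\<bar>"
    by (simp add: distrib_right)
  ultimately have "1 + exp (- (w + a) + c) \<le> (1 + exp (- w + c)) * exp \<bar>a\<bar>"
    by linarith
  then have "ln (1 + exp (- (w + a) + c)) \<le> ln ((1 + exp (- w + c)) * exp \<bar>a\<bar>)"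
    by (intro ln_mono) (auto simp: add_pos_pos)
  also have "\<dots> = ln (1 + exp (- w + c)) + \<bar>a\<bar>"
  proof -
    have "1 + exp (- w + c) > 0" by (simp add: add_pos_pos)
    then show ?thesis by (simp add: ln_mult)
  qed
  finally show ?thesis .
qed

lemma pointwise:
  fixes \<beta> xi xh z x :: "real ^ 'n"
  assumes lam: "lam \<ge> 0" and lamh: "lamh \<ge> 0" and hq: "1 \<le> q"
    and hL: "Lalpha \<alpha> p \<beta> (l * (\<beta> \<bullet> xi) + z \<bullet> (xh - xi)) \<le> R"
    and h1: "pnorm (conj_exp q) (l *\<^sub>R \<beta> - z) \<le> lam"
    and h2: "pnorm (conj_exp q) z \<le> lamh"
  shows "loss \<alpha> p \<beta> x l - lam * pnorm q (xi - x) - lamh * pnorm q (xh - x) \<le> R"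
proof -
  define w where "w = l * (\<beta> \<bullet> xi) + z \<bullet> (xh - xi)"
  define a where "a = (x - xi) \<bullet> (l *\<^sub>R \<beta> - z) - (xh - x) \<bullet> z"
  have id: "l * (\<beta> \<bullet> x) = w + a"
    unfolding w_def a_def by (simp add: inner_diff_left inner_diff_right inner_commute algebra_simps)
  have a1: "\<bar>(x - xi) \<bullet> (l *\<^sub>R \<beta> - z)\<bar> \<le> pnorm q (xi - x) * lam"
    using holder_pnorm[OF hq, of "x - xi" "l *\<^sub>R \<beta> - z"] h1 pnorm_nonneg[of q "x - xi"]
    by (metis mult_left_mono order_trans pnorm_minus)
  have a2: "\<bar>(xh - x) \<bullet> z\<bar> \<le> pnorm q (xh - x) * lamh"
    using holder_pnorm[OF hq, of "xh - x" z] h2 pnorm_nonneg[of q "xh - x"]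
    by (metis mult_left_mono order_trans)
  have aa: "\<bar>a\<bar> \<le> lam * pnorm q (xi - x) + lamh * pnorm q (xh - x)"
    unfolding a_def using a1 a2 by (simp add: mult.commute)
  have "loss \<alpha> p \<beta> x l \<le> Lalpha \<alpha> p \<beta> w + \<bar>a\<bar>"
    unfolding loss_def Lalpha_def id using L_lip[of w a] by simp
  then show ?thesis using hL aa unfolding w_def by linarith
qed

lemma meas_pnorm: "(\<lambda>x::real^'n. pnorm q x) \<in> borel_measurable borel"
proof (cases "q = \<infinity>")
  case True
  have c: "(\<lambda>x::real^'n. \<bar>x $ i\<bar>) \<in> borel_measurable borel" for i
    by (intro borel_measurable_continuous_onI continuous_intros)
  show ?thesis unfolding pnorm_def using True
    using borel_measurable_Max[of UNIV "\<lambda>i x. \<bar>x $ i\<bar>" borel] c by simp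
next
  case False
  have c[measurable]: "(\<lambda>x::real^'n. x $ i) \<in> borel_measurable borel" for i
    by (intro borel_measurable_continuous_onI continuous_intros)
  show ?thesis unfolding pnorm_def using False by measurable
qed

lemma meas_pnorm'[measurable]: "f \<in> borel_measurable M \<Longrightarrow> (\<lambda>x. pnorm q (f x :: real^'n)) \<in> borel_measurable M"
  using measurable_compose[OF _ meas_pnorm] by blast

lemma meas_fst_b[measurable]: "(fst :: ('a::topological_space \<times> 'b::topological_space) \<Rightarrow> 'a) \<in> borel_measurable borel"
  by (intro borel_measurable_continuous_onI continuous_intros)
lemma meas_snd_b[measurable]: "(snd :: ('a::topological_space \<times> 'b::topological_space) \<Rightarrow> 'b) \<in> borel_measurable borel"
  by (intro borel_measurable_continuous_onI continuous_intros)

lemma meas_dXi: "(\<lambda>w. dXi \<kappa> q (fst w) (snd w :: (real^'n) \<times> real)) \<in> borel_measurable borel"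
  unfolding dXi_def by measurable

lemma transport:
  fixes Q P :: "((real^'n) \<times> real) measure" and F :: "(real^'n) \<times> real \<Rightarrow> real"
    and G :: "(real^'n) \<times> real \<Rightarrow> ennreal"
  assumes W: "wass \<kappa> q Q P \<le> ennreal \<epsilon>" and lam: "lam \<ge> 0" and eps: "\<epsilon> \<ge> 0"
    and Fm[measurable]: "F \<in> borel_measurable borel" and Gm[measurable]: "G \<in> borel_measurable borel"
    and pt: "\<And>u v. ennreal (F u) \<le> ennreal lam * ennreal (dXi \<kappa> q u v) + G v"
  shows "(\<integral>\<^sup>+ u. ennreal (F u) \<partial>Q) \<le> ennreal (lam * \<epsilon>) + (\<integral>\<^sup>+ v. G v \<partial>P)"
proof -
  let ?X = "\<integral>\<^sup>+ u. ennreal (F u) \<partial>Q"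
  let ?B = "\<integral>\<^sup>+ v. G v \<partial>P"
  have main: "?X \<le> ennreal lam * (\<integral>\<^sup>+ w. ennreal (dXi \<kappa> q (fst w) (snd w)) \<partial>\<pi>) + ?B"
    if "\<pi> \<in> couplings Q P" for \<pi>
  proof -
    have sp: "sets \<pi> = sets borel" and dQ: "distr \<pi> borel fst = Q" and dP: "distr \<pi> borel snd = P"
      using that unfolding couplings_def by auto
    have mc: "measurable \<pi> borel = measurable borel borel"
      by (rule measurable_cong_sets[OF sp refl])
    have mfst: "fst \<in> measurable \<pi> borel" unfolding mc by measurable
    have msnd: "snd \<in> measurable \<pi> borel" unfolding mc by measurable
    have md: "(\<lambda>w. ennreal (dXi \<kappa> q (fst w) (snd w))) \<in> borel_measurable \<pi>"
      unfolding mc using meas_dXi by measurable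
    have mG: "(\<lambda>w. G (snd w)) \<in> borel_measurable \<pi>" unfolding mc by measurable
    have "?X = (\<integral>\<^sup>+ w. ennreal (F (fst w)) \<partial>\<pi>)"
      unfolding dQ[symmetric] by (rule nn_integral_distr[OF mfst]) measurable
    also have "\<dots> \<le> (\<integral>\<^sup>+ w. ennreal lam * ennreal (dXi \<kappa> q (fst w) (snd w)) + G (snd w) \<partial>\<pi>)"
      by (rule nn_integral_mono) (rule pt)
    also have "\<dots> = ennreal lam * (\<integral>\<^sup>+ w. ennreal (dXi \<kappa> q (fst w) (snd w)) \<partial>\<pi>) + (\<integral>\<^sup>+ w. G (snd w) \<partial>\<pi>)"
      using md mG by (simp add: nn_integral_add nn_integral_cmult)
    also have "(\<integral>\<^sup>+ w. G (snd w) \<partial>\<pi>) = ?B"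
      unfolding dP[symmetric] by (rule nn_integral_distr[OF msnd, symmetric]) measurable
    finally show ?thesis .
  qed
  show ?thesis
  proof (rule ennreal_le_epsilon)
    fix e :: real assume e: "0 < e"
    define \<delta> where "\<delta> = e / (lam + 1)"
    have \<delta>: "\<delta> > 0" "lam * \<delta> \<le> e" using e lam unfolding \<delta>_def by (auto simp: field_simps)
    have "wass \<kappa> q Q P < ennreal (\<epsilon> + \<delta>)"
      using W \<delta> eps by (metis add_pos_nonneg ennreal_lessI less_add_same_cancel1 order.strict_trans1)
    then obtain \<pi> where \<pi>: "\<pi> \<in> couplings Q P"
      and c: "(\<integral>\<^sup>+ w. ennreal (dXi \<kappa> q (fst w) (snd w)) \<partial>\<pi>) < ennreal (\<epsilon> + \<delta>)"
      unfolding wass_def by (auto simp: INF_less_iff)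
    have "?X \<le> ennreal lam * ennreal (\<epsilon> + \<delta>) + ?B"
    proof -
      have "ennreal lam * (\<integral>\<^sup>+ w. ennreal (dXi \<kappa> q (fst w) (snd w)) \<partial>\<pi>) \<le> ennreal lam * ennreal (\<epsilon> + \<delta>)"
        using c by (intro mult_left_mono) auto
      then show ?thesis using main[OF \<pi>] by (meson add_right_mono order_trans)
    qed
    also have "ennreal lam * ennreal (\<epsilon> + \<delta>) = ennreal (lam * \<epsilon>) + ennreal (lam * \<delta>)"
      using lam eps \<delta> by (simp add: ennreal_mult[symmetric] distrib_left ennreal_plus)
    also have "ennreal (lam * \<delta>) \<le> ennreal e" by (rule ennreal_leI[OF \<delta>(2)])
    finally show "?X \<le> ennreal (lam * \<epsilon>) + ?B + ennreal e"
      by (simp add: ac_simps add_mono)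
  qed
qed

lemma loss_le_fg:
  fixes \<beta> x :: "real^'n"
  assumes feas: "interARO_star_feasible \<kappa> \<alpha> p q N xs ys Nh xhs yhs \<beta> lam lamh s sh z"
    and ys: "\<forall>i<N. ys i \<in> {-1, 1}" and yhs: "\<forall>j<Nh. yhs j \<in> {-1, 1}"
    and q: "1 \<le> q" and y: "y \<in> {-1, 1}" and i: "i < N" and j: "j < Nh"
  shows "loss \<alpha> p \<beta> x y \<le> (s i + lam * dXi \<kappa> q (x, y) (xs i, ys i)) + (sh j + lamh * dXi \<kappa> q (x, y) (xhs j, yhs j))"
proof -
  have lam: "lam \<ge> 0" "lamh \<ge> 0" using feas unfolding interARO_star_feasible_def by auto
  have c: "Lalpha \<alpha> p \<beta> (y * (\<beta> \<bullet> xs i) + z i j y \<bullet> (xhs j - xs i))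
          \<le> s i + \<kappa> * (1 - y * ys i) / 2 * lam + sh j + \<kappa> * (1 - y * yhs j) / 2 * lamh"
      "pnorm (conj_exp q) (y *\<^sub>R \<beta> - z i j y) \<le> lam" "pnorm (conj_exp q) (z i j y) \<le> lamh"
  proof -
    have "\<forall>i<N. \<forall>j<Nh. \<forall>l\<in>{-1, 1::real}.
        Lalpha \<alpha> p \<beta> (l * (\<beta> \<bullet> xs i) + z i j l \<bullet> (xhs j - xs i))
          \<le> s i + \<kappa> * (1 - l * ys i) / 2 * lam + sh j + \<kappa> * (1 - l * yhs j) / 2 * lamh \<and>
        pnorm (conj_exp q) (l *\<^sub>R \<beta> - z i j l) \<le> lam \<and>
        pnorm (conj_exp q) (z i j l) \<le> lamh"
      using feas unfolding interARO_star_feasible_def by (elim conjE)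
    then have "Lalpha \<alpha> p \<beta> (y * (\<beta> \<bullet> xs i) + z i j y \<bullet> (xhs j - xs i))
          \<le> s i + \<kappa> * (1 - y * ys i) / 2 * lam + sh j + \<kappa> * (1 - y * yhs j) / 2 * lamh \<and>
        pnorm (conj_exp q) (y *\<^sub>R \<beta> - z i j y) \<le> lam \<and>
        pnorm (conj_exp q) (z i j y) \<le> lamh"
      using i j y by blast
    then show "Lalpha \<alpha> p \<beta> (y * (\<beta> \<bullet> xs i) + z i j y \<bullet> (xhs j - xs i))
          \<le> s i + \<kappa> * (1 - y * ys i) / 2 * lam + sh j + \<kappa> * (1 - y * yhs j) / 2 * lamh"
      "pnorm (conj_exp q) (y *\<^sub>R \<beta> - z i j y) \<le> lam" "pnorm (conj_exp q) (z i j y) \<le> lamh"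
      by auto
  qed
  have pw: "loss \<alpha> p \<beta> x y - lam * pnorm q (xs i - x) - lamh * pnorm q (xhs j - x)
      \<le> s i + \<kappa> * (1 - y * ys i) / 2 * lam + sh j + \<kappa> * (1 - y * yhs j) / 2 * lamh"
    by (rule pointwise[OF lam q c])
  have e1: "\<kappa> * (1 - y * ys i) / 2 = \<kappa> * (if y \<noteq> ys i then 1 else 0)"
  proof -
    have "ys i = -1 \<or> ys i = 1" "y = -1 \<or> y = 1" using ys i y by auto
    then show ?thesis by (elim disjE) simp_all
  qed
  have e2: "\<kappa> * (1 - y * yhs j) / 2 = \<kappa> * (if y \<noteq> yhs j then 1 else 0)"
  proof -
    have "yhs j = -1 \<or> yhs j = 1" "y = -1 \<or> y = 1" using yhs j y by auto
    then show ?thesis by (elim disjE) simp_all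
  qed
  have "pnorm q (xs i - x) = pnorm q (x - xs i)" "pnorm q (xhs j - x) = pnorm q (x - xhs j)"
    by (rule pnorm_minus)+
  then show ?thesis using pw unfolding dXi_def e1 e2 by (simp add: algebra_simps)
qed


lemma emp_int:
  fixes xs :: "nat \<Rightarrow> real^'n"
  assumes N: "N > 0" and s: "\<forall>i<N. s i \<ge> 0"
  shows "(\<integral>\<^sup>+ v. Min ((\<lambda>i. if v = (xs i, ys i) then ennreal (s i) else \<infinity>) ` {..<N}) \<partial>empirical N xs ys)
     \<le> ennreal ((\<Sum>i<N. s i) / real N)"
proof -
  let ?G = "\<lambda>v. Min ((\<lambda>i. if v = (xs i, ys i) then ennreal (s i) else \<infinity>) ` {..<N})"
  have mx: "(\<lambda>i. (xs i, ys i)) \<in> measurable (uniform_count_measure {..<N}) borel"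
    by (simp add: measurable_count_space_eq1 sets_uniform_count_measure_count_space
        measurable_cong_sets[OF sets_uniform_count_measure_count_space refl])
  have mG: "?G \<in> borel_measurable borel" by measurable
  have "(\<integral>\<^sup>+ v. ?G v \<partial>empirical N xs ys) = (\<integral>\<^sup>+ i. ?G (xs i, ys i) \<partial>uniform_count_measure {..<N})"
    unfolding empirical_def by (rule nn_integral_distr[OF mx]) (use mG in measurable)
  also have "\<dots> = (\<Sum>i<N. ennreal (1 / real N) * ?G (xs i, ys i))"
    unfolding uniform_count_measure_def by (simp add: nn_integral_point_measure_finite)
  also have "\<dots> \<le> (\<Sum>i<N. ennreal (1 / real N) * ennreal (s i))"
  proof (rule sum_mono, rule mult_left_mono)
    fix i assume "i \<in> {..<N}"
    then show "?G (xs i, ys i) \<le> ennreal (s i)"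
      by (intro Min_le_iff[THEN iffD2]) auto
  qed auto
  also have "\<dots> = ennreal ((\<Sum>i<N. s i) / real N)"
  proof -
    have "(\<Sum>i<N. ennreal (1 / real N) * ennreal (s i)) = (\<Sum>i<N. ennreal (s i / real N))"
      using s by (intro sum.cong refl) (simp add: ennreal_mult[symmetric])
    also have "\<dots> = ennreal (\<Sum>i<N. s i / real N)" using s by (intro sum_ennreal) simp
    finally show ?thesis by (simp add: sum_divide_distrib)
  qed
  finally show ?thesis .
qed

lemma dXi_nonneg: "\<kappa> \<ge> 0 \<Longrightarrow> dXi \<kappa> q u v \<ge> 0"
  unfolding dXi_def using pnorm_nonneg[of q "fst u - fst v"] by auto

lemma meas_dXi1[measurable]: "(\<lambda>u. dXi \<kappa> q u (c :: (real^'n) \<times> real)) \<in> borel_measurable borel"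
  unfolding dXi_def by measurable

lemma meas_loss: "(\<lambda>u. loss \<alpha> p \<beta> (fst u) (snd u)) \<in> borel_measurable (borel :: ((real^'n) \<times> real) measure)"
  unfolding loss_def Lalpha_def by measurable

lemma loss_nonneg: "loss \<alpha> p \<beta> x y \<ge> 0"
  unfolding loss_def Lalpha_def by (simp add: add_pos_pos)

lemma expect_bound:
  fixes xs xhs :: "nat \<Rightarrow> real^'n"
  assumes feas: "interARO_star_feasible \<kappa> \<alpha> p q N xs ys Nh xhs yhs \<beta> lam lamh s sh z"
    and ys: "\<forall>i<N. ys i \<in> {-1, 1}" and yhs: "\<forall>j<Nh. yhs j \<in> {-1, 1}"
    and \<kappa>: "\<kappa> \<ge> 0" and q: "1 \<le> q" and eps: "\<epsilon> \<ge> 0" "\<epsilon>h \<ge> 0" and N: "N > 0" "Nh > 0"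
    and Q: "Q \<in> wball \<kappa> q \<epsilon> (empirical N xs ys) \<inter> wball \<kappa> q \<epsilon>h (empirical Nh xhs yhs)"
  shows "(\<integral>u. loss \<alpha> p \<beta> (fst u) (snd u) \<partial>Q) \<le> interARO_star_obj \<epsilon> \<epsilon>h N Nh lam lamh s sh"
proof -
  have lam: "lam \<ge> 0" "lamh \<ge> 0" and s: "\<forall>i<N. s i \<ge> 0" and sh: "\<forall>j<Nh. sh j \<ge> 0"
    using feas unfolding interARO_star_feasible_def by auto
  have sQ: "sets Q = sets borel" and AE: "AE u in Q. u \<in> Xi"
    and W1: "wass \<kappa> q Q (empirical N xs ys) \<le> ennreal \<epsilon>"
    and W2: "wass \<kappa> q Q (empirical Nh xhs yhs) \<le> ennreal \<epsilon>h"
    using Q unfolding wball_def P1_def by auto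
  have mcQ: "measurable Q borel = measurable borel borel"
    by (rule measurable_cong_sets[OF sQ refl])
  define F where "F u = Min ((\<lambda>i. s i + lam * dXi \<kappa> q u (xs i, ys i)) ` {..<N})" for u
  define H where "H u = Min ((\<lambda>j. sh j + lamh * dXi \<kappa> q u (xhs j, yhs j)) ` {..<Nh})" for u
  define G where "G v = Min ((\<lambda>i. if v = (xs i, ys i) then ennreal (s i) else \<infinity>) ` {..<N})" for v
  define K where "K v = Min ((\<lambda>j. if v = (xhs j, yhs j) then ennreal (sh j) else \<infinity>) ` {..<Nh})" for v
  have Fm[measurable]: "F \<in> borel_measurable borel" unfolding F_def by measurable
  have Hm[measurable]: "H \<in> borel_measurable borel" unfolding H_def by measurable
  have Gm: "G \<in> borel_measurable borel" unfolding G_def by measurable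
  have Km: "K \<in> borel_measurable borel" unfolding K_def by measurable
  have Fnn: "F u \<ge> 0" for u
    unfolding F_def using N s lam by (subst Min_ge_iff) (auto intro!: add_nonneg_nonneg mult_nonneg_nonneg dXi_nonneg[OF \<kappa>])
  have Hnn: "H u \<ge> 0" for u
    unfolding H_def using N sh lam by (subst Min_ge_iff) (auto intro!: add_nonneg_nonneg mult_nonneg_nonneg dXi_nonneg[OF \<kappa>])
  have ptF: "ennreal (F u) \<le> ennreal lam * ennreal (dXi \<kappa> q u v) + G v" for u v
  proof -
    obtain k where k: "k < N" "G v = (if v = (xs k, ys k) then ennreal (s k) else \<infinity>)"
    proof -
      have "G v \<in> (\<lambda>i. if v = (xs i, ys i) then ennreal (s i) else \<infinity>) ` {..<N}"
        unfolding G_def by (rule Min_in) (use N in auto)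
      then show ?thesis using that by blast
    qed
    show ?thesis
    proof (cases "v = (xs k, ys k)")
      case True
      have "F u \<le> s k + lam * dXi \<kappa> q u v" unfolding F_def True using k by (intro Min_le) auto
      then have "ennreal (F u) \<le> ennreal (lam * dXi \<kappa> q u v + s k)" by (simp add: ennreal_leI add.commute)
      also have "\<dots> = ennreal lam * ennreal (dXi \<kappa> q u v) + ennreal (s k)"
      proof -
        have d0: "dXi \<kappa> q u v \<ge> 0" by (rule dXi_nonneg[OF \<kappa>])
        have p0: "lam * dXi \<kappa> q u v \<ge> 0" using d0 lam by simp
        have s0: "s k \<ge> 0" using s k by simp
        show ?thesis using p0 s0 d0 lam by (simp add: ennreal_plus ennreal_mult)
      qed
      finally show ?thesis using k True by simp
    qed (use k in simp)
  qed
  have ptH: "ennreal (H u) \<le> ennreal lamh * ennreal (dXi \<kappa> q u v) + K v" for u v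
  proof -
    obtain k where k: "k < Nh" "K v = (if v = (xhs k, yhs k) then ennreal (sh k) else \<infinity>)"
    proof -
      have "K v \<in> (\<lambda>i. if v = (xhs i, yhs i) then ennreal (sh i) else \<infinity>) ` {..<Nh}"
        unfolding K_def by (rule Min_in) (use N in auto)
      then show ?thesis using that by blast
    qed
    show ?thesis
    proof (cases "v = (xhs k, yhs k)")
      case True
      have "H u \<le> sh k + lamh * dXi \<kappa> q u v" unfolding H_def True using k by (intro Min_le) auto
      then have "ennreal (H u) \<le> ennreal (lamh * dXi \<kappa> q u v + sh k)" by (simp add: ennreal_leI add.commute)
      also have "\<dots> = ennreal lamh * ennreal (dXi \<kappa> q u v) + ennreal (sh k)"
      proof -
        have d0: "dXi \<kappa> q u v \<ge> 0" by (rule dXi_nonneg[OF \<kappa>])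
        have p0: "lamh * dXi \<kappa> q u v \<ge> 0" using d0 lam by simp
        have s0: "sh k \<ge> 0" using sh k by simp
        show ?thesis using p0 s0 d0 lam by (simp add: ennreal_plus ennreal_mult)
      qed
      finally show ?thesis using k True by simp
    qed (use k in simp)
  qed
  have intF: "(\<integral>\<^sup>+ u. ennreal (F u) \<partial>Q) \<le> ennreal (lam * \<epsilon>) + ennreal ((\<Sum>i<N. s i) / real N)"
  proof -
    have "(\<integral>\<^sup>+ u. ennreal (F u) \<partial>Q) \<le> ennreal (lam * \<epsilon>) + (\<integral>\<^sup>+ v. G v \<partial>empirical N xs ys)"
      by (rule transport[OF W1 lam(1) eps(1) Fm Gm ptF])
    also have "(\<integral>\<^sup>+ v. G v \<partial>empirical N xs ys) \<le> ennreal ((\<Sum>i<N. s i) / real N)"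
      unfolding G_def by (rule emp_int[OF N(1) s])
    finally show ?thesis by (simp add: add_left_mono)
  qed
  have intH: "(\<integral>\<^sup>+ u. ennreal (H u) \<partial>Q) \<le> ennreal (lamh * \<epsilon>h) + ennreal ((\<Sum>j<Nh. sh j) / real Nh)"
  proof -
    have "(\<integral>\<^sup>+ u. ennreal (H u) \<partial>Q) \<le> ennreal (lamh * \<epsilon>h) + (\<integral>\<^sup>+ v. K v \<partial>empirical Nh xhs yhs)"
      by (rule transport[OF W2 lam(2) eps(2) Hm Km ptH])
    also have "(\<integral>\<^sup>+ v. K v \<partial>empirical Nh xhs yhs) \<le> ennreal ((\<Sum>j<Nh. sh j) / real Nh)"
      unfolding K_def by (rule emp_int[OF N(2) sh])
    finally show ?thesis by (simp add: add_left_mono)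
  qed
  have ptL: "ennreal (loss \<alpha> p \<beta> (fst u) (snd u)) \<le> ennreal (F u) + ennreal (H u)" if u: "u \<in> Xi" for u
  proof -
    obtain i where i: "i < N" "F u = s i + lam * dXi \<kappa> q u (xs i, ys i)"
    proof -
      have "F u \<in> (\<lambda>i. s i + lam * dXi \<kappa> q u (xs i, ys i)) ` {..<N}"
        unfolding F_def by (rule Min_in) (use N in auto)
      then show ?thesis using that by blast
    qed
    obtain j where j: "j < Nh" "H u = sh j + lamh * dXi \<kappa> q u (xhs j, yhs j)"
    proof -
      have "H u \<in> (\<lambda>j. sh j + lamh * dXi \<kappa> q u (xhs j, yhs j)) ` {..<Nh}"
        unfolding H_def by (rule Min_in) (use N in auto)
      then show ?thesis using that by blast
    qed
    have y: "snd u \<in> {-1, 1}" using u unfolding Xi_def by auto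
    have L: "loss \<alpha> p \<beta> (fst u) (snd u) \<le> (s i + lam * dXi \<kappa> q u (xs i, ys i)) + (sh j + lamh * dXi \<kappa> q u (xhs j, yhs j))"
      using loss_le_fg[OF feas ys yhs q y i(1) j(1), of "fst u"] by (simp only: prod.collapse)
    have "loss \<alpha> p \<beta> (fst u) (snd u) \<le> F u + H u"
      using L i(2) j(2) by linarith
    then have "ennreal (loss \<alpha> p \<beta> (fst u) (snd u)) \<le> ennreal (F u + H u)" by (rule ennreal_leI)
    also have "\<dots> = ennreal (F u) + ennreal (H u)" by (rule ennreal_plus[OF Fnn Hnn])
    finally show ?thesis .
  qed
  have mL: "(\<lambda>u. loss \<alpha> p \<beta> (fst u) (snd u)) \<in> borel_measurable Q"
    unfolding mcQ by (rule meas_loss)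
  have mF: "(\<lambda>u. ennreal (F u)) \<in> borel_measurable Q" unfolding mcQ by measurable
  have mH: "(\<lambda>u. ennreal (H u)) \<in> borel_measurable Q" unfolding mcQ by measurable
  define obj where "obj = interARO_star_obj \<epsilon> \<epsilon>h N Nh lam lamh s sh"
  have objnn: "obj \<ge> 0" unfolding obj_def interARO_star_obj_def
    using lam eps s sh by (intro add_nonneg_nonneg divide_nonneg_nonneg sum_nonneg) auto
  have "(\<integral>\<^sup>+ u. ennreal (loss \<alpha> p \<beta> (fst u) (snd u)) \<partial>Q) \<le> (\<integral>\<^sup>+ u. ennreal (F u) + ennreal (H u) \<partial>Q)"
    by (rule nn_integral_mono_AE) (use AE ptL in auto)
  also have "\<dots> = (\<integral>\<^sup>+ u. ennreal (F u) \<partial>Q) + (\<integral>\<^sup>+ u. ennreal (H u) \<partial>Q)"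
    by (rule nn_integral_add[OF mF mH])
  also have "\<dots> \<le> (ennreal (lam * \<epsilon>) + ennreal ((\<Sum>i<N. s i) / real N)) +
                   (ennreal (lamh * \<epsilon>h) + ennreal ((\<Sum>j<Nh. sh j) / real Nh))"
    by (rule add_mono[OF intF intH])
  also have "\<dots> = ennreal obj"
  proof -
    have a: "lam * \<epsilon> \<ge> 0" "lamh * \<epsilon>h \<ge> 0" using lam eps by auto
    have b: "(\<Sum>i<N. s i) / real N \<ge> 0" "(\<Sum>j<Nh. sh j) / real Nh \<ge> 0"
      using s sh by (auto intro!: divide_nonneg_nonneg sum_nonneg)
    have "(ennreal (lam * \<epsilon>) + ennreal ((\<Sum>i<N. s i) / real N)) +
          (ennreal (lamh * \<epsilon>h) + ennreal ((\<Sum>j<Nh. sh j) / real Nh))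
        = ennreal ((lam * \<epsilon> + (\<Sum>i<N. s i) / real N) + (lamh * \<epsilon>h + (\<Sum>j<Nh. sh j) / real Nh))"
      using a b by (simp only: ennreal_plus add_nonneg_nonneg)
    also have "(lam * \<epsilon> + (\<Sum>i<N. s i) / real N) + (lamh * \<epsilon>h + (\<Sum>j<Nh. sh j) / real Nh) = obj"
      unfolding obj_def interARO_star_obj_def by (simp add: algebra_simps)
    finally show ?thesis .
  qed
  finally have nn: "(\<integral>\<^sup>+ u. ennreal (loss \<alpha> p \<beta> (fst u) (snd u)) \<partial>Q) \<le> ennreal obj" .
  show ?thesis
  proof (cases "integrable Q (\<lambda>u. loss \<alpha> p \<beta> (fst u) (snd u))")
    case True
    have "(\<integral>u. loss \<alpha> p \<beta> (fst u) (snd u) \<partial>Q) = enn2real (\<integral>\<^sup>+ u. ennreal (loss \<alpha> p \<beta> (fst u) (snd u)) \<partial>Q)"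
      by (rule integral_eq_nn_integral[OF mL]) (simp add: loss_nonneg)
    also have "\<dots> \<le> enn2real (ennreal obj)" by (rule enn2real_mono[OF nn]) simp
    also have "\<dots> = obj" using objnn by simp
    finally show ?thesis unfolding obj_def .
  next
    case False
    then show ?thesis using objnn unfolding obj_def by (simp add: not_integrable_integral_eq)
  qed
qed

lemma feas_at:
  assumes feas: "interARO_star_feasible \<kappa> \<alpha> p q N xs ys Nh xhs yhs \<beta> lam lamh s sh z"
    and i: "i < N" and j: "j < Nh" and l: "l \<in> {-1, 1::real}"
  shows "Lalpha \<alpha> p \<beta> (l * (\<beta> \<bullet> xs i) + z i j l \<bullet> (xhs j - xs i))
          \<le> s i + \<kappa> * (1 - l * ys i) / 2 * lam + sh j + \<kappa> * (1 - l * yhs j) / 2 * lamh"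
    "pnorm (conj_exp q) (l *\<^sub>R \<beta> - z i j l) \<le> lam" "pnorm (conj_exp q) (z i j l) \<le> lamh"
proof -
  have "\<forall>i<N. \<forall>j<Nh. \<forall>l\<in>{-1, 1::real}.
      Lalpha \<alpha> p \<beta> (l * (\<beta> \<bullet> xs i) + z i j l \<bullet> (xhs j - xs i))
        \<le> s i + \<kappa> * (1 - l * ys i) / 2 * lam + sh j + \<kappa> * (1 - l * yhs j) / 2 * lamh \<and>
      pnorm (conj_exp q) (l *\<^sub>R \<beta> - z i j l) \<le> lam \<and>
      pnorm (conj_exp q) (z i j l) \<le> lamh"
    using feas unfolding interARO_star_feasible_def by (elim conjE)
  then have "Lalpha \<alpha> p \<beta> (l * (\<beta> \<bullet> xs i) + z i j l \<bullet> (xhs j - xs i))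
        \<le> s i + \<kappa> * (1 - l * ys i) / 2 * lam + sh j + \<kappa> * (1 - l * yhs j) / 2 * lamh \<and>
      pnorm (conj_exp q) (l *\<^sub>R \<beta> - z i j l) \<le> lam \<and>
      pnorm (conj_exp q) (z i j l) \<le> lamh"
    using i j l by blast
  then show "Lalpha \<alpha> p \<beta> (l * (\<beta> \<bullet> xs i) + z i j l \<bullet> (xhs j - xs i))
          \<le> s i + \<kappa> * (1 - l * ys i) / 2 * lam + sh j + \<kappa> * (1 - l * yhs j) / 2 * lamh"
    "pnorm (conj_exp q) (l *\<^sub>R \<beta> - z i j l) \<le> lam" "pnorm (conj_exp q) (z i j l) \<le> lamh"
    by auto
qed

theorem theorem1:
  fixes \<kappa> \<alpha> \<epsilon> \<epsilon>h :: real and p q :: ereal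
    and N Nh :: nat
    and xs xhs :: "nat \<Rightarrow> real ^ 'n" and ys yhs :: "nat \<Rightarrow> real"
  assumes "\<kappa> \<ge> 0" and "\<alpha> \<ge> 0"
    and "1 \<le> p" and "1 \<le> q"
    and "\<epsilon> \<ge> 0" and "\<epsilon>h \<ge> 0"
    and "N > 0" and "Nh > 0"
    and "\<forall>i<N. ys i \<in> {-1, 1}" and "\<forall>j<Nh. yhs j \<in> {-1, 1}"
  shows "(\<forall>\<beta> lam lamh s sh z.
            interARO_star_feasible \<kappa> \<alpha> p q N xs ys Nh xhs yhs \<beta> lam lamh s sh z \<longrightarrow>
              (\<forall>i<N. \<forall>j<Nh. \<forall>l\<in>{-1, 1::real}.
                 (SUP x. ereal (loss \<alpha> p \<beta> x l - lam * pnorm q (xs i - x) - lamh * pnorm q (xhs j - x)))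
                   \<le> ereal (s i + \<kappa> * (1 - l * ys i) / 2 * lam + sh j + \<kappa> * (1 - l * yhs j) / 2 * lamh)) \<and>
              (\<forall>Q \<in> wball \<kappa> q \<epsilon> (empirical N xs ys) \<inter> wball \<kappa> q \<epsilon>h (empirical Nh xhs yhs).
                 (\<integral>u. loss \<alpha> p \<beta> (fst u) (snd u) \<partial>Q) \<le> interARO_star_obj \<epsilon> \<epsilon>h N Nh lam lamh s sh))
         \<and> interARO_value \<kappa> \<alpha> p q \<epsilon> \<epsilon>h N xs ys Nh xhs yhs
             \<le> interARO_star_value \<kappa> \<alpha> p q \<epsilon> \<epsilon>h N xs ys Nh xhs yhs"
proof -
  note A = assms
  have fe: "(\<forall>i<N. \<forall>j<Nh. \<forall>l\<in>{-1, 1::real}.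
                 (SUP x. ereal (loss \<alpha> p \<beta> x l - lam * pnorm q (xs i - x) - lamh * pnorm q (xhs j - x)))
                   \<le> ereal (s i + \<kappa> * (1 - l * ys i) / 2 * lam + sh j + \<kappa> * (1 - l * yhs j) / 2 * lamh)) \<and>
              (\<forall>Q \<in> wball \<kappa> q \<epsilon> (empirical N xs ys) \<inter> wball \<kappa> q \<epsilon>h (empirical Nh xhs yhs).
                 (\<integral>u. loss \<alpha> p \<beta> (fst u) (snd u) \<partial>Q) \<le> interARO_star_obj \<epsilon> \<epsilon>h N Nh lam lamh s sh)"
    if feas: "interARO_star_feasible \<kappa> \<alpha> p q N xs ys Nh xhs yhs \<beta> lam lamh s sh z" for \<beta> lam lamh s sh z
  proof
    have lam: "lam \<ge> 0" "lamh \<ge> 0" using feas unfolding interARO_star_feasible_def by auto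
    show "\<forall>i<N. \<forall>j<Nh. \<forall>l\<in>{-1, 1::real}.
                 (SUP x. ereal (loss \<alpha> p \<beta> x l - lam * pnorm q (xs i - x) - lamh * pnorm q (xhs j - x)))
                   \<le> ereal (s i + \<kappa> * (1 - l * ys i) / 2 * lam + sh j + \<kappa> * (1 - l * yhs j) / 2 * lamh)"
    proof (intro allI impI ballI SUP_least)
      fix i j l x assume i: "i < N" and j: "j < Nh" and l: "l \<in> {-1, 1::real}"
      have "loss \<alpha> p \<beta> x l - lam * pnorm q (xs i - x) - lamh * pnorm q (xhs j - x)
          \<le> s i + \<kappa> * (1 - l * ys i) / 2 * lam + sh j + \<kappa> * (1 - l * yhs j) / 2 * lamh"
        by (rule pointwise[OF lam A(4) feas_at[OF feas i j l]])
      then show "ereal (loss \<alpha> p \<beta> x l - lam * pnorm q (xs i - x) - lamh * pnorm q (xhs j - x))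
          \<le> ereal (s i + \<kappa> * (1 - l * ys i) / 2 * lam + sh j + \<kappa> * (1 - l * yhs j) / 2 * lamh)"
        by simp
    qed
    show "\<forall>Q \<in> wball \<kappa> q \<epsilon> (empirical N xs ys) \<inter> wball \<kappa> q \<epsilon>h (empirical Nh xhs yhs).
                 (\<integral>u. loss \<alpha> p \<beta> (fst u) (snd u) \<partial>Q) \<le> interARO_star_obj \<epsilon> \<epsilon>h N Nh lam lamh s sh"
      using expect_bound[OF feas A(9) A(10) A(1) A(4) A(5) A(6) A(7) A(8)] by blast
  qed
  have val: "interARO_value \<kappa> \<alpha> p q \<epsilon> \<epsilon>h N xs ys Nh xhs yhs
             \<le> interARO_star_value \<kappa> \<alpha> p q \<epsilon> \<epsilon>h N xs ys Nh xhs yhs"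
    unfolding interARO_star_value_def
  proof (rule INF_greatest)
    fix t assume t: "t \<in> {(\<beta>, lam, lamh, s, sh, z). interARO_star_feasible \<kappa> \<alpha> p q N xs ys Nh xhs yhs \<beta> lam lamh s sh z}"
    obtain \<beta> lam lamh s sh z where teq: "t = (\<beta>, lam, lamh, s, sh, z)" by (cases t) auto
    have feas: "interARO_star_feasible \<kappa> \<alpha> p q N xs ys Nh xhs yhs \<beta> lam lamh s sh z"
      using t teq by simp
    have "interARO_value \<kappa> \<alpha> p q \<epsilon> \<epsilon>h N xs ys Nh xhs yhs
        \<le> (SUP Q \<in> wball \<kappa> q \<epsilon> (empirical N xs ys) \<inter> wball \<kappa> q \<epsilon>h (empirical Nh xhs yhs).
             ereal (\<integral>u. loss \<alpha> p \<beta> (fst u) (snd u) \<partial>Q))"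
      unfolding interARO_value_def by (rule INF_lower) simp
    also have "\<dots> \<le> ereal (interARO_star_obj \<epsilon> \<epsilon>h N Nh lam lamh s sh)"
      using fe[OF feas] by (intro SUP_least) simp
    finally show "interARO_value \<kappa> \<alpha> p q \<epsilon> \<epsilon>h N xs ys Nh xhs yhs
        \<le> (case t of (\<beta>, lam, lamh, s, sh, z) \<Rightarrow> ereal (interARO_star_obj \<epsilon> \<epsilon>h N Nh lam lamh s sh))"
      using teq by simp
  qed
  show ?thesis using fe val by blast
qed

end
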